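(* Let $N<22$ be even. Then all rays and counter-rays of the Birkhoff polytope $\mathcal{B}_N$ consist of unistochastic matrices. Moreover, for $N\in\{2,4,8,12,16,20\}$ all these matrices are orthostochastic; for $N\in\{6,10,14,18\}$ they are unistochastic.
   Context: A bistochastic matrix is a real $N\times N$ matrix with nonnegative entries whose rows and columns each sum to 1; the set of them is the Birkhoff polytope $\mathcal{B}_N$. A bistochastic $B$ is unistochastic if there is a unitary $U$ with $B_{ij}=|U_{ij}|^2$ for all $i,j$, and orthostochastic if such $U$ can be chosen real orthogonal. $W_N$ is the $N\times N$ matrix with all entries $1/N$. For a permutation matrix $P$, its ray is $\{\alpha P+(1-\alpha)W_N:\alpha\ge0\}\cap\mathcal{B}_N$ and its counter-ray is $\{\alpha P+(1-\alpha)W_N:\alpha\le0\}\cap\mathcal{B}_N$. *)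

theory Defs
  imports "HOL-Analysis.Analysis"
begin

definition bistochastic :: "real^'n^'n \<Rightarrow> bool" where
  "bistochastic B \<longleftrightarrow> (\<forall>i j. B $ i $ j \<ge> 0) \<and>
     (\<forall>i. (\<Sum>j\<in>UNIV. B $ i $ j) = 1) \<and> (\<forall>j. (\<Sum>i\<in>UNIV. B $ i $ j) = 1)"

definition unitary_mat :: "complex^'n^'n \<Rightarrow> bool" where
  "unitary_mat U \<longleftrightarrow>
     (\<forall>i j. (\<Sum>k\<in>UNIV. U $ i $ k * cnj (U $ j $ k)) = (if i = j then 1 else 0))"

definition unistochastic :: "real^'n^'n \<Rightarrow> bool" where
  "unistochastic B \<longleftrightarrow> bistochastic B \<and>
     (\<exists>U::complex^'n^'n. unitary_mat U \<and> (\<forall>i j. B $ i $ j = (cmod (U $ i $ j))\<^sup>2))"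

definition orthostochastic :: "real^'n^'n \<Rightarrow> bool" where
  "orthostochastic B \<longleftrightarrow> bistochastic B \<and>
     (\<exists>Q::real^'n^'n. orthogonal_matrix Q \<and> (\<forall>i j. B $ i $ j = (Q $ i $ j)\<^sup>2))"

definition flat_mat :: "real^'n^'n" where
  "flat_mat = (\<chi> i j. 1 / real CARD('n))"

definition perm_mat :: "('n \<Rightarrow> 'n) \<Rightarrow> real^'n^'n" where
  "perm_mat \<sigma> = (\<chi> i j. if \<sigma> i = j then 1 else 0)"

definition is_perm_mat :: "real^'n^'n \<Rightarrow> bool" where
  "is_perm_mat P \<longleftrightarrow> (\<exists>\<sigma>. \<sigma> permutes (UNIV::'n set) \<and> P = perm_mat \<sigma>)"

definition ray :: "real^'n^'n \<Rightarrow> (real^'n^'n) set" where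
  "ray P = {B. \<exists>\<alpha>::real. \<alpha> \<ge> 0 \<and> B = \<alpha> *\<^sub>R P + (1 - \<alpha>) *\<^sub>R flat_mat \<and> bistochastic B}"

definition counter_ray :: "real^'n^'n \<Rightarrow> (real^'n^'n) set" where
  "counter_ray P = {B. \<exists>\<alpha>::real. \<alpha> \<le> 0 \<and> B = \<alpha> *\<^sub>R P + (1 - \<alpha>) *\<^sub>R flat_mat \<and> bistochastic B}"

end

theory Submission
  imports Defs
begin
definition M2 :: "int list list" where "M2 = [[0, 1], [-1, 0]]"

definition M4 :: "int list list" where "M4 = [[0, 1, 1, 1], [-1, 0, 1, -1], [-1, -1, 0, 1], [-1, 1, -1, 0]]"

definition M6 :: "int list list" where "M6 = [[0, 1, 1, 1, 1, 1], [1, 0, 1, -1, -1, 1], [1, 1, 0, 1, -1, -1], [1, -1, 1, 0, 1, -1], [1, -1, -1, 1, 0, 1], [1, 1, -1, -1, 1, 0]]"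

definition M8 :: "int list list" where "M8 = [[0, 1, 1, 1, 1, 1, 1, 1], [-1, 0, 1, 1, -1, 1, -1, -1], [-1, -1, 0, 1, 1, -1, 1, -1], [-1, -1, -1, 0, 1, 1, -1, 1], [-1, 1, -1, -1, 0, 1, 1, -1], [-1, -1, 1, -1, -1, 0, 1, 1], [-1, 1, -1, 1, -1, -1, 0, 1], [-1, 1, 1, -1, 1, -1, -1, 0]]"

definition M10 :: "int list list" where "M10 = [[0, 1, 1, 1, 1, 1, 1, 1, 1, 1], [1, 0, 1, 1, 1, -1, -1, 1, -1, -1], [1, 1, 0, 1, -1, 1, -1, -1, 1, -1], [1, 1, 1, 0, -1, -1, 1, -1, -1, 1], [1, 1, -1, -1, 0, 1, 1, 1, -1, -1], [1, -1, 1, -1, 1, 0, 1, -1, 1, -1], [1, -1, -1, 1, 1, 1, 0, -1, -1, 1], [1, 1, -1, -1, 1, -1, -1, 0, 1, 1], [1, -1, 1, -1, -1, 1, -1, 1, 0, 1], [1, -1, -1, 1, -1, -1, 1, 1, 1, 0]]"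

definition M12 :: "int list list" where "M12 = [[0, 1, 1, 1, 1, 1, 1, 1, 1, 1, 1, 1], [-1, 0, 1, -1, 1, 1, 1, -1, -1, -1, 1, -1], [-1, -1, 0, 1, -1, 1, 1, 1, -1, -1, -1, 1], [-1, 1, -1, 0, 1, -1, 1, 1, 1, -1, -1, -1], [-1, -1, 1, -1, 0, 1, -1, 1, 1, 1, -1, -1], [-1, -1, -1, 1, -1, 0, 1, -1, 1, 1, 1, -1], [-1, -1, -1, -1, 1, -1, 0, 1, -1, 1, 1, 1], [-1, 1, -1, -1, -1, 1, -1, 0, 1, -1, 1, 1], [-1, 1, 1, -1, -1, -1, 1, -1, 0, 1, -1, 1], [-1, 1, 1, 1, -1, -1, -1, 1, -1, 0, 1, -1], [-1, -1, 1, 1, 1, -1, -1, -1, 1, -1, 0, 1], [-1, 1, -1, 1, 1, 1, -1, -1, -1, 1, -1, 0]]"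

definition M14 :: "int list list" where "M14 = [[0, 1, 1, 1, 1, 1, 1, 1, 1, 1, 1, 1, 1, 1], [1, 0, 1, -1, 1, 1, -1, -1, -1, -1, 1, 1, -1, 1], [1, 1, 0, 1, -1, 1, 1, -1, -1, -1, -1, 1, 1, -1], [1, -1, 1, 0, 1, -1, 1, 1, -1, -1, -1, -1, 1, 1], [1, 1, -1, 1, 0, 1, -1, 1, 1, -1, -1, -1, -1, 1], [1, 1, 1, -1, 1, 0, 1, -1, 1, 1, -1, -1, -1, -1], [1, -1, 1, 1, -1, 1, 0, 1, -1, 1, 1, -1, -1, -1], [1, -1, -1, 1, 1, -1, 1, 0, 1, -1, 1, 1, -1, -1], [1, -1, -1, -1, 1, 1, -1, 1, 0, 1, -1, 1, 1, -1], [1, -1, -1, -1, -1, 1, 1, -1, 1, 0, 1, -1, 1, 1], [1, 1, -1, -1, -1, -1, 1, 1, -1, 1, 0, 1, -1, 1], [1, 1, 1, -1, -1, -1, -1, 1, 1, -1, 1, 0, 1, -1], [1, -1, 1, 1, -1, -1, -1, -1, 1, 1, -1, 1, 0, 1], [1, 1, -1, 1, 1, -1, -1, -1, -1, 1, 1, -1, 1, 0]]"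

definition M16 :: "int list list" where "M16 = [[0, 1, 1, 1, 1, 1, 1, 1, 1, 1, 1, 1, 1, 1, 1, 1], [-1, 0, 1, 1, -1, 1, -1, -1, -1, 1, 1, 1, -1, 1, -1, -1], [-1, -1, 0, 1, 1, -1, 1, -1, -1, -1, 1, 1, 1, -1, 1, -1], [-1, -1, -1, 0, 1, 1, -1, 1, -1, -1, -1, 1, 1, 1, -1, 1], [-1, 1, -1, -1, 0, 1, 1, -1, -1, 1, -1, -1, 1, 1, 1, -1], [-1, -1, 1, -1, -1, 0, 1, 1, -1, -1, 1, -1, -1, 1, 1, 1], [-1, 1, -1, 1, -1, -1, 0, 1, -1, 1, -1, 1, -1, -1, 1, 1], [-1, 1, 1, -1, 1, -1, -1, 0, -1, 1, 1, -1, 1, -1, -1, 1], [-1, 1, 1, 1, 1, 1, 1, 1, 0, -1, -1, -1, -1, -1, -1, -1], [-1, -1, 1, 1, -1, 1, -1, -1, 1, 0, -1, -1, 1, -1, 1, 1], [-1, -1, -1, 1, 1, -1, 1, -1, 1, 1, 0, -1, -1, 1, -1, 1], [-1, -1, -1, -1, 1, 1, -1, 1, 1, 1, 1, 0, -1, -1, 1, -1], [-1, 1, -1, -1, -1, 1, 1, -1, 1, -1, 1, 1, 0, -1, -1, 1], [-1, -1, 1, -1, -1, -1, 1, 1, 1, 1, -1, 1, 1, 0, -1, -1], [-1, 1, -1, 1, -1, -1, -1, 1, 1, -1, 1, -1, 1, 1, 0, -1], [-1, 1, 1, -1, 1, -1, -1, -1, 1, -1, -1, 1, -1, 1, 1,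 0]]"

definition M18 :: "int list list" where "M18 = [[0, 1, 1, 1, 1, 1, 1, 1, 1, 1, 1, 1, 1, 1, 1, 1, 1, 1], [1, 0, 1, 1, -1, 1, -1, -1, -1, 1, 1, -1, -1, -1, 1, -1, 1, 1], [1, 1, 0, 1, 1, -1, 1, -1, -1, -1, 1, 1, -1, -1, -1, 1, -1, 1], [1, 1, 1, 0, 1, 1, -1, 1, -1, -1, -1, 1, 1, -1, -1, -1, 1, -1], [1, -1, 1, 1, 0, 1, 1, -1, 1, -1, -1, -1, 1, 1, -1, -1, -1, 1], [1, 1, -1, 1, 1, 0, 1, 1, -1, 1, -1, -1, -1, 1, 1, -1, -1, -1], [1, -1, 1, -1, 1, 1, 0, 1, 1, -1, 1, -1, -1, -1, 1, 1, -1, -1], [1, -1, -1, 1, -1, 1, 1, 0, 1, 1, -1, 1, -1, -1, -1, 1, 1, -1], [1, -1, -1, -1, 1, -1, 1, 1, 0, 1, 1, -1, 1, -1, -1, -1, 1, 1], [1, 1, -1, -1, -1, 1, -1, 1, 1, 0, 1, 1, -1, 1, -1, -1, -1, 1], [1, 1, 1, -1, -1, -1, 1, -1, 1, 1, 0, 1, 1, -1, 1, -1, -1, -1], [1, -1, 1, 1, -1, -1, -1, 1, -1, 1, 1, 0, 1, 1, -1, 1, -1, -1], [1, -1, -1, 1, 1, -1, -1, -1, 1, -1, 1, 1, 0, 1, 1, -1, 1, -1], [1, -1, -1, -1, 1, 1, -1, -1, -1, 1, -1, 1, 1, 0, 1, 1, -1, 1], [1, 1, -1, -1, -1, 1, 1,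 -1, -1, -1, 1, -1, 1, 1, 0, 1, 1, -1], [1, -1, 1, -1, -1, -1, 1, 1, -1, -1, -1, 1, -1, 1, 1, 0, 1, 1], [1, 1, -1, 1, -1, -1, -1, 1, 1, -1, -1, -1, 1, -1, 1, 1, 0, 1], [1, 1, 1, -1, 1, -1, -1, -1, 1, 1, -1, -1, -1, 1, -1, 1, 1, 0]]"

definition M20 :: "int list list" where "M20 = [[0, 1, 1, 1, 1, 1, 1, 1, 1, 1, 1, 1, 1, 1, 1, 1, 1, 1, 1, 1], [-1, 0, 1, -1, -1, 1, 1, 1, 1, -1, 1, -1, 1, -1, -1, -1, -1, 1, 1, -1], [-1, -1, 0, 1, -1, -1, 1, 1, 1, 1, -1, 1, -1, 1, -1, -1, -1, -1, 1, 1], [-1, 1, -1, 0, 1, -1, -1, 1, 1, 1, 1, -1, 1, -1, 1, -1, -1, -1, -1, 1], [-1, 1, 1, -1, 0, 1, -1, -1, 1, 1, 1, 1, -1, 1, -1, 1, -1, -1, -1, -1], [-1, -1, 1, 1, -1, 0, 1, -1, -1, 1, 1, 1, 1, -1, 1, -1, 1, -1, -1, -1], [-1, -1, -1, 1, 1, -1, 0, 1, -1, -1, 1, 1, 1, 1, -1, 1, -1, 1, -1, -1], [-1, -1, -1, -1, 1, 1, -1, 0, 1, -1, -1, 1, 1, 1, 1, -1, 1, -1, 1, -1], [-1, -1, -1, -1, -1, 1, 1, -1, 0, 1, -1, -1, 1, 1, 1, 1, -1, 1, -1, 1], [-1, 1, -1, -1, -1, -1, 1, 1, -1, 0, 1,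 -1, -1, 1, 1, 1, 1, -1, 1, -1], [-1, -1, 1, -1, -1, -1, -1, 1, 1, -1, 0, 1, -1, -1, 1, 1, 1, 1, -1, 1], [-1, 1, -1, 1, -1, -1, -1, -1, 1, 1, -1, 0, 1, -1, -1, 1, 1, 1, 1, -1], [-1, -1, 1, -1, 1, -1, -1, -1, -1, 1, 1, -1, 0, 1, -1, -1, 1, 1, 1, 1], [-1, 1, -1, 1, -1, 1, -1, -1, -1, -1, 1, 1, -1, 0, 1, -1, -1, 1, 1, 1], [-1, 1, 1, -1, 1, -1, 1, -1, -1, -1, -1, 1, 1, -1, 0, 1, -1, -1, 1, 1], [-1, 1, 1, 1, -1, 1, -1, 1, -1, -1, -1, -1, 1, 1, -1, 0, 1, -1, -1, 1], [-1, 1, 1, 1, 1, -1, 1, -1, 1, -1, -1, -1, -1, 1, 1, -1, 0, 1, -1, -1], [-1, -1, 1, 1, 1, 1, -1, 1, -1, 1, -1, -1, -1, -1, 1, 1, -1, 0, 1, -1], [-1, -1, -1, 1, 1, 1, 1, -1, 1, -1, 1, -1, -1, -1, -1, 1, 1, -1, 0, 1], [-1, 1, -1, -1, 1, 1, 1, 1, -1, 1, -1, 1, -1, -1, -1, -1, 1, 1, -1, 0]]"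

definition conf_chk :: "int \<Rightarrow> nat \<Rightarrow> int list list \<Rightarrow> bool" where
 "conf_chk s n M \<longleftrightarrow> length M = n \<and> (\<forall>i\<in>set [0..<n]. length (M!i) = n) \<and>
   (\<forall>i\<in>set [0..<n]. \<forall>j\<in>set [0..<n]. M!i!j * M!i!j = (if i=j then 0 else 1) \<and> M!j!i = s * M!i!j \<and>
     sum_list (map (\<lambda>k. M!i!k * M!j!k) [0..<n]) = (if i=j then int n - 1 else 0))"

definition conf :: "real \<Rightarrow> ('n \<Rightarrow> 'n \<Rightarrow> real) \<Rightarrow> bool" where
 "conf s S \<longleftrightarrow> (\<forall>i j. S i j * S i j = (if i=j then 0 else 1) \<and> S j i = s * S i j \<and>
     (\<Sum>k\<in>UNIV. S i k * S j k) = (if i=j then real CARD('n) - 1 else 0))"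

lemma conf_transfer:
  assumes "conf_chk s n M" "CARD('n) = n"
  shows "\<exists>S::'n::finite \<Rightarrow> 'n \<Rightarrow> real. conf (of_int s) S"
proof -
  have "\<exists>h. bij_betw h (UNIV::'n set) {0..<CARD('n)}" by (rule ex_bij_betw_finite_nat) simp
  then obtain g :: "'n \<Rightarrow> nat" where g: "bij_betw g UNIV {0..<n}"
    using assms(2) by auto
  have gl: "g i < n" for i using g by (auto simp: bij_betw_def)
  have ginj: "g i = g j \<longleftrightarrow> i = j" for i j using g by (auto simp: bij_betw_def inj_on_def)
  define S where "S i j = real_of_int (M ! g i ! g j)" for i j
  have A: "\<forall>i\<in>set [0..<n]. \<forall>j\<in>set [0..<n]. M!i!j * M!i!j = (if i=j then 0 else 1) \<and> M!j!i = s * M!i!j \<and>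
     sum_list (map (\<lambda>k. M!i!k * M!j!k) [0..<n]) = (if i=j then int n - 1 else 0)"
    using assms(1) unfolding conf_chk_def by blast
  have C: "M!i!j * M!i!j = (if i=j then 0 else 1) \<and> M!j!i = s * M!i!j \<and>
     (\<Sum>k\<in>{0..<n}. M!i!k * M!j!k) = (if i=j then int n - 1 else 0)" if "i < n" "j < n" for i j
  proof -
    have i: "i \<in> set [0..<n]" and j: "j \<in> set [0..<n]" using that by simp_all
    have "M!i!j * M!i!j = (if i=j then 0 else 1) \<and> M!j!i = s * M!i!j \<and>
      sum_list (map (\<lambda>k. M!i!k * M!j!k) [0..<n]) = (if i=j then int n - 1 else 0)"
      using A i j by blast
    then show ?thesis unfolding interv_sum_list_conv_sum_set_nat set_upt .
  qed
  have "conf (of_int s) S"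
    unfolding conf_def
  proof (intro allI conjI)
    fix i j
    have c: "M!g i!g j * M!g i!g j = (if g i=g j then 0 else 1) \<and> M!g j!g i = s * M!g i!g j \<and>
     (\<Sum>k\<in>{0..<n}. M!g i!k * M!g j!k) = (if g i=g j then int n - 1 else 0)"
      using C gl by blast
    show "S i j * S i j = (if i = j then 0 else 1)"
      using c unfolding S_def ginj by (metis of_int_0 of_int_1 of_int_mult)
    show "S j i = of_int s * S i j" using c unfolding S_def by simp
    have "(\<Sum>k\<in>UNIV. S i k * S j k) = (\<Sum>k\<in>UNIV. of_int (M!g i!g k * M!g j!g k))"
      unfolding S_def by simp
    also have "\<dots> = (\<Sum>k\<in>{0..<n}. of_int (M!g i!k * M!g j!k))"
      using sum.reindex_bij_betw[OF g, of "\<lambda>k. real_of_int (M!g i!k * M!g j!k)"] by simp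
    also have "\<dots> = of_int (\<Sum>k\<in>{0..<n}. M!g i!k * M!g j!k)" by simp
    also have "\<dots> = (if i = j then real CARD('n) - 1 else 0)" using c assms(2) ginj by simp
    finally show "(\<Sum>k\<in>UNIV. S i k * S j k) = (if i = j then real CARD('n) - 1 else 0)" .
  qed
  then show ?thesis by blast
qed

lemma row_real:
  fixes S :: "'n::finite \<Rightarrow> 'n \<Rightarrow> real"
  assumes "conf (-1) S" "c*c + (real CARD('n) - 1) * (d*d) = 1"
  shows "(\<Sum>k\<in>UNIV. ((if p = k then c else 0) + d * S p k) * ((if q = k then c else 0) + d * S q k))
     = (if p = q then 1 else 0)"
proof -
  have e: "((if p = k then c else 0) + d * S p k) * ((if q = k then c else 0) + d * S q k) =
     (if p = k then c * (if q = k then c else 0) else 0) + (if q = k then c * d * S p k else 0)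
     + (if p = k then c * d * S q k else 0) + d * d * (S p k * S q k)" for k
    by (auto simp: algebra_simps)
  have "S q p = (-1) * S p q" using assms(1) unfolding conf_def by blast
  then have sk: "S q p = - S p q" by simp
  have or: "(\<Sum>k\<in>UNIV. S p k * S q k) = (if p = q then real CARD('n) - 1 else 0)"
    using assms(1) unfolding conf_def by blast
  have s1: "(\<Sum>k\<in>UNIV. (if p = k then c * (if q = k then c else 0) else 0)) = (if p = q then c * c else 0)"
    by (simp add: sum.delta)
  have s2: "(\<Sum>k\<in>UNIV. (if q = k then c * d * S p k else 0)) = c*d*S p q"
    by (simp add: sum.delta)
  have s3: "(\<Sum>k\<in>UNIV. (if p = k then c * d * S q k else 0)) = c*d*S q p"
    by (simp add: sum.delta)
  have s4: "(\<Sum>k\<in>UNIV. d * d * (S p k * S q k)) = d*d*(\<Sum>k\<in>UNIV. S p k * S q k)"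
    by (simp add: sum_distrib_left)
  have "(\<Sum>k\<in>UNIV. ((if p = k then c else 0) + d * S p k) * ((if q = k then c else 0) + d * S q k))
     = (if p = q then c * c else 0) + c*d*S p q + c*d*S q p + d*d*(\<Sum>k\<in>UNIV. S p k * S q k)"
    unfolding e sum.distrib s1 s2 s3 s4 by simp
  also have "\<dots> = (if p = q then 1 else 0)" unfolding sk or using assms(2)
    by (auto simp: algebra_simps)
  finally show ?thesis .
qed

lemma row_cplx:
  fixes S :: "'n::finite \<Rightarrow> 'n \<Rightarrow> real"
  assumes "conf 1 S" "c*c + (real CARD('n) - 1) * (d*d) = 1"
  shows "(\<Sum>k\<in>UNIV. ((if p = k then complex_of_real c else 0) + \<i> * complex_of_real (d * S p k)) *
      cnj ((if q = k then complex_of_real c else 0) + \<i> * complex_of_real (d * S q k)))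
     = (if p = q then 1 else 0)"
proof -
  have e: "((if p = k then complex_of_real c else 0) + \<i> * complex_of_real (d * S p k)) *
      cnj ((if q = k then complex_of_real c else 0) + \<i> * complex_of_real (d * S q k)) =
      complex_of_real ((if p = k then c * (if q = k then c else 0) else 0) + d * d * (S p k * S q k))
      + \<i> * complex_of_real ((if q = k then c * d * S p k else 0) - (if p = k then c * d * S q k else 0))" for k
    by (cases "p = k"; cases "q = k"; simp add: complex_eq_iff algebra_simps)
  have "S q p = 1 * S p q" using assms(1) unfolding conf_def by blast
  then have sk: "S q p = S p q" by simp
  have or: "(\<Sum>k\<in>UNIV. S p k * S q k) = (if p = q then real CARD('n) - 1 else 0)"
    using assms(1) unfolding conf_def by blast
  have s1: "(\<Sum>k\<in>UNIV. (if p = k then c * (if q = k then c else 0) else 0)) = (if p = q then c * c else 0)"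
    by (simp add: sum.delta)
  have s2: "(\<Sum>k\<in>UNIV. (if q = k then c * d * S p k else 0)) = c*d*S p q"
    by (simp add: sum.delta)
  have s3: "(\<Sum>k\<in>UNIV. (if p = k then c * d * S q k else 0)) = c*d*S q p"
    by (simp add: sum.delta)
  have s4: "(\<Sum>k\<in>UNIV. d * d * (S p k * S q k)) = d*d*(\<Sum>k\<in>UNIV. S p k * S q k)"
    by (simp add: sum_distrib_left)
  have "(\<Sum>k\<in>UNIV. ((if p = k then complex_of_real c else 0) + \<i> * complex_of_real (d * S p k)) *
      cnj ((if q = k then complex_of_real c else 0) + \<i> * complex_of_real (d * S q k)))
     = complex_of_real ((if p = q then c * c else 0) + d*d*(\<Sum>k\<in>UNIV. S p k * S q k))
       + \<i> * complex_of_real (c*d*S p q - c*d*S q p)"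
    unfolding e sum.distrib of_real_sum[symmetric] sum_distrib_left[symmetric] sum_subtractf s1 s2 s3 s4
    by simp
  note eq1 = this
  have r: "(if p = q then c * c else 0) + d*d*(\<Sum>k\<in>UNIV. S p k * S q k) = (if p = q then 1 else 0)"
    unfolding or using assms(2) by (auto simp: algebra_simps)
  have "complex_of_real ((if p = q then c * c else 0) + d*d*(\<Sum>k\<in>UNIV. S p k * S q k))
       + \<i> * complex_of_real (c*d*S p q - c*d*S q p) = (if p = q then 1 else 0)"
    unfolding r sk by simp
  then show ?thesis using eq1 by simp
qed

lemma ortho_from_conf:
  fixes B :: "real^'n^'n" and S :: "'n \<Rightarrow> 'n \<Rightarrow> real"
  assumes S: "conf (-1) S" and sig: "\<sigma> permutes UNIV" and ab: "a \<ge> 0" "b \<ge> 0"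
    "a + (real CARD('n) - 1) * b = 1"
    and B: "\<forall>i j. B$i$j = (if \<sigma> i = j then a else b)" and bi: "bistochastic B"
  shows "orthostochastic B"
proof -
  define c where "c = sqrt a"
  define d where "d = sqrt b"
  have cd: "c*c + (real CARD('n) - 1) * (d*d) = 1" using ab unfolding c_def d_def by simp
  define Q :: "real^'n^'n" where "Q = (\<chi> i j. (if \<sigma> i = j then c else 0) + d * S (\<sigma> i) j)"
  have inj: "\<sigma> i = \<sigma> j \<longleftrightarrow> i = j" for i j using sig by (metis permutes_inj injD)
  have "Q ** transpose Q = mat 1"
    unfolding vec_eq_iff matrix_matrix_mult_def transpose_def mat_def Q_def
    using row_real[OF S cd] inj by simp
  then have oQ: "orthogonal_matrix Q" unfolding orthogonal_matrix matrix_left_right_inverse .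
  have sq: "S i j * S i j = (if i = j then 0 else 1)" for i j using S unfolding conf_def by blast
  have "B$i$j = (Q$i$j)\<^sup>2" for i j
  proof (cases "\<sigma> i = j")
    case True
    then have "S (\<sigma> i) j = 0" using sq[of j j] by simp
    then show ?thesis using True B ab unfolding Q_def c_def by simp
  next
    case False
    then have "(Q$i$j)\<^sup>2 = d * d * (S (\<sigma> i) j * S (\<sigma> i) j)" unfolding Q_def power2_eq_square by simp
    also have "\<dots> = b" using sq[of "\<sigma> i" j] False ab unfolding d_def by simp
    finally show ?thesis using B False by simp
  qed
  then show ?thesis unfolding orthostochastic_def using bi oQ by blast
qed

lemma uni_from_conf:
  fixes B :: "real^'n^'n" and S :: "'n \<Rightarrow> 'n \<Rightarrow> real"
  assumes S: "conf 1 S" and sig: "\<sigma> permutes UNIV" and ab: "a \<ge> 0" "b \<ge> 0"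
    "a + (real CARD('n) - 1) * b = 1"
    and B: "\<forall>i j. B$i$j = (if \<sigma> i = j then a else b)" and bi: "bistochastic B"
  shows "unistochastic B"
proof -
  define c where "c = sqrt a"
  define d where "d = sqrt b"
  have cd: "c*c + (real CARD('n) - 1) * (d*d) = 1" using ab unfolding c_def d_def by simp
  define U :: "complex^'n^'n" where "U = (\<chi> i j. (if \<sigma> i = j then complex_of_real c else 0) + \<i> * complex_of_real (d * S (\<sigma> i) j))"
  have inj: "\<sigma> i = \<sigma> j \<longleftrightarrow> i = j" for i j using sig by (metis permutes_inj injD)
  have uU: "unitary_mat U"
    unfolding unitary_mat_def U_def
    using row_cplx[OF S cd] inj by simp
  have sq: "S i j * S i j = (if i = j then 0 else 1)" for i j using S unfolding conf_def by blast
  have "B$i$j = (cmod (U$i$j))\<^sup>2" for i j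
  proof (cases "\<sigma> i = j")
    case True
    then have "S (\<sigma> i) j = 0" using sq[of j j] by simp
    then show ?thesis using True B ab unfolding U_def c_def by simp
  next
    case False
    then have "(cmod (U$i$j))\<^sup>2 = (d * S (\<sigma> i) j)\<^sup>2" unfolding U_def by (simp add: norm_mult power_mult_distrib)
    also have "\<dots> = d * d * (S (\<sigma> i) j * S (\<sigma> i) j)" by (simp add: power2_eq_square)
    also have "\<dots> = b" using sq[of "\<sigma> i" j] False ab unfolding d_def by simp
    finally show ?thesis using B False by simp
  qed
  then show ?thesis unfolding unistochastic_def using bi uU by blast
qed

lemma ortho_uni: "orthostochastic (B::real^'n^'n) \<Longrightarrow> unistochastic B"
proof -
  assume "orthostochastic B"
  then obtain Q :: "real^'n^'n" where bi: "bistochastic B" and Q: "orthogonal_matrix Q"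
    and BQ: "\<forall>i j. B $ i $ j = (Q $ i $ j)\<^sup>2" unfolding orthostochastic_def by blast
  define U :: "complex^'n^'n" where "U = (\<chi> i j. complex_of_real (Q$i$j))"
  have "Q ** transpose Q = mat 1" using Q unfolding orthogonal_matrix_def by blast
  then have "(\<Sum>k\<in>UNIV. Q$i$k * Q$j$k) = (if i = j then 1 else 0)" for i j
    unfolding vec_eq_iff matrix_matrix_mult_def transpose_def mat_def by simp
  then have "unitary_mat U" unfolding unitary_mat_def U_def
    by (simp flip: of_real_mult of_real_sum)
  moreover have "\<forall>i j. B $ i $ j = (cmod (U $ i $ j))\<^sup>2" using BQ unfolding U_def by simp
  ultimately show ?thesis using bi unfolding unistochastic_def by blast
qed

lemma chk2: "conf_chk (-1) 2 M2" by code_simp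
lemma chk4: "conf_chk (-1) 4 M4" by code_simp
lemma chk8: "conf_chk (-1) 8 M8" by code_simp
lemma chk12: "conf_chk (-1) 12 M12" by code_simp
lemma chk16: "conf_chk (-1) 16 M16" by code_simp
lemma chk20: "conf_chk (-1) 20 M20" by code_simp
lemma chk6: "conf_chk 1 6 M6" by code_simp
lemma chk10: "conf_chk 1 10 M10" by code_simp
lemma chk14: "conf_chk 1 14 M14" by code_simp
lemma chk18: "conf_chk 1 18 M18" by code_simp

lemma ray_form:
  fixes B P :: "real^'n^'n"
  assumes "B \<in> ray P \<union> counter_ray P" "is_perm_mat P" "CARD('n) \<ge> 2"
  shows "\<exists>\<sigma> a b. \<sigma> permutes UNIV \<and> a \<ge> 0 \<and> b \<ge> 0 \<and> a + (real CARD('n) - 1) * b = 1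
     \<and> (\<forall>i j. B$i$j = (if \<sigma> i = j then a else b)) \<and> bistochastic B"
proof -
  obtain \<alpha> where Bd: "B = \<alpha> *\<^sub>R P + (1 - \<alpha>) *\<^sub>R flat_mat" and bi: "bistochastic B"
    using assms(1) unfolding ray_def counter_ray_def by blast
  obtain \<sigma> where sig: "\<sigma> permutes UNIV" and P: "P = perm_mat \<sigma>"
    using assms(2) unfolding is_perm_mat_def by blast
  define N where "N = real CARD('n)"
  have N2: "N \<ge> 2" using assms(3) unfolding N_def by simp
  define a where "a = \<alpha> + (1 - \<alpha>) / N"
  define b where "b = (1 - \<alpha>) / N"
  have Be: "B$i$j = (if \<sigma> i = j then a else b)" for i j
    unfolding Bd P perm_mat_def flat_mat_def a_def b_def N_def by simp
  have nn: "B$i$j \<ge> 0" for i j using bi unfolding bistochastic_def by blast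
  have a0: "a \<ge> 0" using nn[of undefined "\<sigma> undefined"] Be by simp
  have "\<exists>x y::'n. x \<noteq> y"
  proof (rule ccontr)
    assume "\<not> ?thesis"
    then have "UNIV = {undefined::'n}" by auto
    then show False using assms(3) by (metis card.empty card_insert_disjoint empty_iff finite.emptyI
          le_antisym nat_le_linear not_less_eq_eq numeral_2_eq_2 One_nat_def)
  qed
  then obtain x y :: 'n where xy: "x \<noteq> y" by blast
  define j where "j = (if \<sigma> undefined = x then y else x)"
  have "\<sigma> undefined \<noteq> j" unfolding j_def using xy by auto
  then have b0: "b \<ge> 0" using nn[of undefined j] Be by simp
  have "a + (N - 1) * b = 1" unfolding a_def b_def using N2 by (simp add: field_simps)
  then show ?thesis using sig a0 b0 Be bi unfolding N_def by blast
qed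


lemma part_orth:
  assumes "CARD('n) \<in> {2,4,8,12,16,20}"
  shows "\<forall>P::real^'n^'n. is_perm_mat P \<longrightarrow> (\<forall>B \<in> ray P \<union> counter_ray P. orthostochastic B)"
proof (intro allI impI ballI)
  fix P B :: "real^'n^'n"
  assume P: "is_perm_mat P" and B: "B \<in> ray P \<union> counter_ray P"
  have "\<exists>S::'n \<Rightarrow> 'n \<Rightarrow> real. conf (of_int (-1)) S"
    using assms conf_transfer[OF chk2] conf_transfer[OF chk4] conf_transfer[OF chk8]
      conf_transfer[OF chk12] conf_transfer[OF chk16] conf_transfer[OF chk20] by auto
  then obtain S :: "'n \<Rightarrow> 'n \<Rightarrow> real" where S: "conf (-1) S" by auto
  have "CARD('n) \<ge> 2" using assms by auto
  then obtain \<sigma> a b where "\<sigma> permutes UNIV" "a \<ge> 0" "b \<ge> 0" "a + (real CARD('n) - 1) * b = 1"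
     "\<forall>i j. B$i$j = (if \<sigma> i = j then a else b)" "bistochastic B"
    using ray_form[OF B P] by blast
  then show "orthostochastic B" using ortho_from_conf[OF S] by blast
qed

lemma part_uni:
  assumes "CARD('n) \<in> {6,10,14,18}"
  shows "\<forall>P::real^'n^'n. is_perm_mat P \<longrightarrow> (\<forall>B \<in> ray P \<union> counter_ray P. unistochastic B)"
proof (intro allI impI ballI)
  fix P B :: "real^'n^'n"
  assume P: "is_perm_mat P" and B: "B \<in> ray P \<union> counter_ray P"
  have "\<exists>S::'n \<Rightarrow> 'n \<Rightarrow> real. conf (of_int 1) S"
    using assms conf_transfer[OF chk6] conf_transfer[OF chk10] conf_transfer[OF chk14]
      conf_transfer[OF chk18] by auto
  then obtain S :: "'n \<Rightarrow> 'n \<Rightarrow> real" where S: "conf 1 S" by auto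
  have "CARD('n) \<ge> 2" using assms by auto
  then obtain \<sigma> a b where "\<sigma> permutes UNIV" "a \<ge> 0" "b \<ge> 0" "a + (real CARD('n) - 1) * b = 1"
     "\<forall>i j. B$i$j = (if \<sigma> i = j then a else b)" "bistochastic B"
    using ray_form[OF B P] by blast
  then show "unistochastic B" using uni_from_conf[OF S] by blast
qed

theorem mainTheorem4:
  assumes "even CARD('n)" and "CARD('n) < 22"
  shows "(\<forall>P::real^'n^'n. is_perm_mat P \<longrightarrow>
            (\<forall>B \<in> ray P \<union> counter_ray P. unistochastic B))
       \<and> (CARD('n) \<in> {2,4,8,12,16,20} \<longrightarrow>
            (\<forall>P::real^'n^'n. is_perm_mat P \<longrightarrow>
               (\<forall>B \<in> ray P \<union> counter_ray P. orthostochastic B)))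
       \<and> (CARD('n) \<in> {6,10,14,18} \<longrightarrow>
            (\<forall>P::real^'n^'n. is_perm_mat P \<longrightarrow>
               (\<forall>B \<in> ray P \<union> counter_ray P. unistochastic B)))"
proof -
  have pos: "CARD('n) > 0" by simp
  have "CARD('n) \<in> {2,4,8,12,16,20} \<or> CARD('n) \<in> {6,10,14,18}"
  proof -
    obtain k where k: "CARD('n) = 2 * k" using assms(1) by (elim evenE)
    then have "k \<ge> 1 \<and> k \<le> 10" using assms(2) pos by auto
    then have "k = 1 \<or> k = 2 \<or> k = 3 \<or> k = 4 \<or> k = 5 \<or> k = 6 \<or> k = 7 \<or> k = 8 \<or> k = 9 \<or> k = 10"
      by presburger
    then show ?thesis using k by auto
  qed
  then show ?thesis using part_orth part_uni ortho_uni by blast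
qed

end
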